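(* Let $\Gamma\subsetneqq\mathbb{R}^n$ be an open convex cone with vertex at the origin such that $\{\lambda:\lambda_i>0\ \forall i\}\subset\Gamma\subset\{\lambda:\sum_i\lambda_i>0\}$, and let $f$ be a smooth symmetric function on $\Gamma$ with $\frac{\partial f}{\partial\lambda_i}>0$ in $\Gamma$ for all $i$, $f(a^*(1,\dots,1))=1$ for some $a^*>0$, and $\limsup_{\lambda\to\lambda_0}f(\lambda)<1$ for every $\lambda_0\in\partial\Gamma$. Let $A=\mathrm{diag}(a_1,\dots,a_n)\in\mathcal{A}$ with $0<a_1\leq\cdots\leq a_n$ and $\frac{\partial f}{\partial\lambda_1}(\lambda(A))=\max_i\frac{\partial f}{\partial\lambda_i}(\lambda(A))$. Let $g:[1,\infty)\to\mathbb{R}$ be the unique smooth function with $(g(w),a_2w,\dots,a_nw)\in\Gamma$ and $f(g(w),a_2w,\dots,a_nw)=1$ for $w\geq1$. Let $c_2>1$, let $\delta\geq0$ be such that $$\alpha_\delta=\frac{\sum_{i=1}^na_i\frac{\partial f}{\partial\lambda_i}(\lambda(A))}{(2a_n+\delta)\frac{\partial f}{\partial\lambda_1}(\lambda(A))}>1,$$ and let $w_{c_2,\delta}(s)$ be a solution on $[1,+\infty)$ of $$\frac{dw}{ds}=\frac{g(w)-a_1w}{(2a_n+\delta)s},\qquad w(1)=c_2.$$ Then $\lim_{s\to+\infty}w_{c_2,\delta}(s)=1$ and $w_{c_2,\delta}(s)-1=O(s^{-\alpha_\delta})$ as $s\to+\infty$.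
   Context: $S^+(n)$ is the set of real symmetric positive definite $n\times n$ matrices; for $A\in S^+(n)$, $a=\lambda(A)$ denotes its eigenvalues, $\hat a=\max_ia_i$, $\hat f_\lambda(a)=\max_i\frac{\partial f}{\partial\lambda_i}(a)$, and $\mathcal{A}:=\{A\in S^+(n): f(a)=1,\ \frac{\nabla f(a)\cdot a}{2\hat a\hat f_\lambda(a)}>1\}$. *)

theory Defs
  imports "HOL-Analysis.Analysis" "HOL-Library.Landau_Symbols"
begin

text \<open>Vectors in R^n are \<open>real ^ 'n\<close> with a finite, well-ordered index type;
  the order on 'n gives the labelling lambda_1, ..., lambda_n.\<close>

definition first_idx :: "'n::{finite,wellorder}" where
  "first_idx = (LEAST i. True)"

definition last_idx :: "'n::{finite,wellorder}" where
  "last_idx = (GREATEST i. True)"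

definition pdiff :: "(real ^ 'n \<Rightarrow> real) \<Rightarrow> 'n::finite \<Rightarrow> real ^ 'n \<Rightarrow> real" where
  "pdiff f i x = deriv (\<lambda>t. f (x + t *\<^sub>R axis i 1)) 0"

text \<open>C^infinity on an open set S: all iterated partial derivatives exist and are continuous
  (D ks is the iterated partial derivative along the index list ks, innermost last).\<close>
definition smooth_on :: "(real ^ 'n::finite) set \<Rightarrow> (real ^ 'n \<Rightarrow> real) \<Rightarrow> bool" where
  "smooth_on S f \<longleftrightarrow> (\<exists>D :: 'n list \<Rightarrow> real ^ 'n \<Rightarrow> real.
      D [] = f \<and>
      (\<forall>ks. continuous_on S (D ks)) \<and>
      (\<forall>ks i. \<forall>x\<in>S. ((\<lambda>t. D ks (x + t *\<^sub>R axis i 1)) has_real_derivative D (i # ks) x) (at 0)))"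

definition smooth_real_on :: "real set \<Rightarrow> (real \<Rightarrow> real) \<Rightarrow> bool" where
  "smooth_real_on S g \<longleftrightarrow> (\<exists>D :: nat \<Rightarrow> real \<Rightarrow> real.
      D 0 = g \<and> (\<forall>k. \<forall>x\<in>S. (D k has_real_derivative D (Suc k) x) (at x within S)))"

definition permute_vec :: "('n::finite \<Rightarrow> 'n) \<Rightarrow> real ^ 'n \<Rightarrow> real ^ 'n" where
  "permute_vec \<sigma> x = (\<chi> i. x $ \<sigma> i)"

text \<open>The set \<A>, restricted to diagonal matrices diag(a): since lambda(diag a) = a,
  membership is expressed on the eigenvalue vector a.\<close>
definition in_calA :: "(real ^ 'n::finite \<Rightarrow> real) \<Rightarrow> real ^ 'n \<Rightarrow> bool" where
  "in_calA f a \<longleftrightarrow> (\<forall>i. a $ i > 0) \<and> f a = 1 \<and>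
     (\<Sum>i\<in>UNIV. pdiff f i a * a $ i) /
       (2 * Max (range (\<lambda>i. a $ i)) * Max (range (\<lambda>i. pdiff f i a))) > 1"

end

theory Submission
  imports Defs
begin

lemma mvt_bound:
  fixes \<phi> \<phi>' :: "real \<Rightarrow> real"
  assumes der: "\<And>t. min 0 c \<le> t \<Longrightarrow> t \<le> max 0 c \<Longrightarrow> (\<phi> has_real_derivative \<phi>' t) (at t)"
    and bnd: "\<And>t. min 0 c \<le> t \<Longrightarrow> t \<le> max 0 c \<Longrightarrow> \<bar>\<phi>' t - L\<bar> \<le> e"
  shows "\<bar>\<phi> c - \<phi> 0 - c * L\<bar> \<le> e * \<bar>c\<bar>"
proof (cases c "0::real" rule: linorder_cases)
  case less
  then obtain z where z: "c < z" "z < 0" "\<phi> 0 - \<phi> c = (0 - c) * \<phi>' z"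
    using MVT2[of c 0 \<phi> \<phi>'] der by auto
  have "\<bar>\<phi>' z - L\<bar> \<le> e" using bnd z less by auto
  then have "\<bar>(0 - c) * (\<phi>' z - L)\<bar> \<le> e * \<bar>c\<bar>" using less
    by (simp add: abs_mult mult.commute mult_left_mono)
  then show ?thesis using z by (simp add: algebra_simps abs_minus_commute)
next
  case equal then show ?thesis by simp
next
  case greater
  then obtain z where z: "0 < z" "z < c" "\<phi> c - \<phi> 0 = (c - 0) * \<phi>' z"
    using MVT2[of 0 c \<phi> \<phi>'] der by auto
  have "\<bar>\<phi>' z - L\<bar> \<le> e" using bnd z greater by auto
  then have "\<bar>(c - 0) * (\<phi>' z - L)\<bar> \<le> e * \<bar>c\<bar>" using greater
    by (simp add: abs_mult mult.commute mult_left_mono)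
  then show ?thesis using z by (simp add: algebra_simps)
qed

lemma partials_has_derivative:
  fixes f :: "real^'n::finite \<Rightarrow> real" and P :: "'n \<Rightarrow> real^'n \<Rightarrow> real"
  assumes S: "open S" and x: "x \<in> S"
    and cont: "\<And>i. continuous_on S (P i)"
    and der: "\<And>i y. y \<in> S \<Longrightarrow> ((\<lambda>t. f (y + t *\<^sub>R axis i 1)) has_real_derivative P i y) (at 0)"
  shows "(f has_derivative (\<lambda>h. \<Sum>i\<in>UNIV. h$i * P i x)) (at x)"
  unfolding has_derivative_at_alt
proof (intro conjI allI impI)
  show "bounded_linear (\<lambda>h. \<Sum>i\<in>UNIV. h$i * P i x)"
    unfolding linear_conv_bounded_linear[symmetric]
    by (rule linearI) (auto simp: sum.distrib sum_distrib_left algebra_simps)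
next
  fix e :: real assume e: "e > 0"
  define e' where "e' = e / real CARD('n)"
  have e': "e' > 0" using e by (simp add: e'_def)
  have "\<forall>\<^sub>F y in at x. y \<in> S"
    using S x eventually_at_topological by blast
  moreover have "\<forall>\<^sub>F y in at x. \<forall>i. dist (P i y) (P i x) < e'"
  proof (rule eventually_all_finite)
    fix i
    have "isCont (P i) x" using cont S x continuous_on_eq_continuous_at by blast
    then show "\<forall>\<^sub>F y in at x. dist (P i y) (P i x) < e'"
      using e' unfolding isCont_def tendsto_iff by blast
  qed
  ultimately have "\<forall>\<^sub>F y in at x. y \<in> S \<and> (\<forall>i. dist (P i y) (P i x) < e')"
    by (rule eventually_conj)
  then obtain d where d: "d > 0" "\<And>y. 0 < dist y x \<Longrightarrow> dist y x < d \<Longrightarrow> y \<in> S \<and> (\<forall>i. dist (P i y) (P i x) < e')"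
    unfolding eventually_at by auto
  have Q: "y \<in> S \<and> (\<forall>i. \<bar>P i y - P i x\<bar> \<le> e')" if "norm (y - x) < d" for y
  proof (cases "y = x")
    case True then show ?thesis using x e' by simp
  next
    case False then show ?thesis using d(2)[of y] that by (auto simp: dist_norm dist_real_def less_imp_le)
  qed
  have main: "\<forall>h. (\<forall>i. i \<notin> T \<longrightarrow> h$i = 0) \<longrightarrow> norm h < d \<longrightarrow>
     \<bar>f (x + h) - f x - (\<Sum>i\<in>T. h$i * P i x)\<bar> \<le> e' * (\<Sum>i\<in>T. \<bar>h$i\<bar>)" for T
  proof (induction T rule: infinite_finite_induct)
    case (infinite A) then show ?case by simp
  next
    case empty
    show ?case
    proof (intro allI impI)
      fix h :: "real^'n" assume "\<forall>i. i \<notin> {} \<longrightarrow> h $ i = 0"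
      then have "h = 0" by (simp add: vec_eq_iff)
      then show "\<bar>f (x + h) - f x - (\<Sum>i\<in>{}. h $ i * P i x)\<bar> \<le> e' * (\<Sum>i\<in>{}. \<bar>h $ i\<bar>)" by simp
    qed
  next
    case (insert j T)
    show ?case
    proof (intro allI impI)
      fix h :: "real^'n"
      assume supp: "\<forall>i. i \<notin> insert j T \<longrightarrow> h$i = 0" and nh: "norm h < d"
      define h' where "h' = (\<chi> i. if i = j then 0 else h$i)"
      have hh': "h = h' + h$j *\<^sub>R axis j 1"
        by (simp add: h'_def vec_eq_iff axis_def)
      have nh'_le: "norm (h' + t *\<^sub>R axis j 1) \<le> norm h" if "\<bar>t\<bar> \<le> \<bar>h$j\<bar>" for t
        by (rule norm_le_componentwise_cart) (use that in \<open>auto simp: h'_def axis_def\<close>)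
      have nh': "norm h' < d" using nh'_le[of 0] nh by simp
      have supp': "\<forall>i. i \<notin> T \<longrightarrow> h'$i = 0" using supp by (auto simp: h'_def)
      have IH: "\<bar>f (x + h') - f x - (\<Sum>i\<in>T. h'$i * P i x)\<bar> \<le> e' * (\<Sum>i\<in>T. \<bar>h'$i\<bar>)"
        using insert.IH supp' nh' by blast
      have eqT: "(\<Sum>i\<in>T. h'$i * P i x) = (\<Sum>i\<in>T. h$i * P i x)"
        "(\<Sum>i\<in>T. \<bar>h'$i\<bar>) = (\<Sum>i\<in>T. \<bar>h$i\<bar>)"
        using insert.hyps by (auto intro!: sum.cong simp: h'_def)
      define \<phi> where "\<phi> t = f (x + h' + t *\<^sub>R axis j 1)" for t
      have step: "\<bar>\<phi> (h$j) - \<phi> 0 - h$j * P j x\<bar> \<le> e' * \<bar>h$j\<bar>"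
      proof (rule mvt_bound[where \<phi>'="\<lambda>t. P j (x + h' + t *\<^sub>R axis j 1)"])
        fix t assume t: "min 0 (h$j) \<le> t" "t \<le> max 0 (h$j)"
        then have "\<bar>t\<bar> \<le> \<bar>h$j\<bar>" by auto
        then have "norm ((x + h' + t *\<^sub>R axis j 1) - x) < d" using nh'_le[of t] nh
          by (simp add: add.assoc)
        note Qt = Q[OF this]
        show "\<bar>P j (x + h' + t *\<^sub>R axis j 1) - P j x\<bar> \<le> e'" using Qt by blast
        have "((\<lambda>s. f ((x + h' + t *\<^sub>R axis j 1) + s *\<^sub>R axis j 1)) has_real_derivative
                P j (x + h' + t *\<^sub>R axis j 1)) (at 0)" using der Qt by blast
        then have "((\<lambda>s. \<phi> (s + t)) has_real_derivative P j (x + h' + t *\<^sub>R axis j 1)) (at 0)"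
          by (simp add: \<phi>_def algebra_simps scaleR_add_left)
        then show "(\<phi> has_real_derivative P j (x + h' + t *\<^sub>R axis j 1)) (at t)"
          using DERIV_shift[of \<phi> _ 0 t] by simp
      qed
      have "\<phi> (h$j) = f (x + h)" using hh' by (simp add: \<phi>_def add.assoc)
      moreover have "\<phi> 0 = f (x + h')" by (simp add: \<phi>_def)
      ultimately have step': "\<bar>f (x + h) - f (x + h') - h$j * P j x\<bar> \<le> e' * \<bar>h$j\<bar>" using step by simp
      have "\<bar>f (x + h) - f x - (\<Sum>i\<in>insert j T. h$i * P i x)\<bar>
          = \<bar>(f (x + h) - f (x + h') - h$j * P j x) + (f (x + h') - f x - (\<Sum>i\<in>T. h'$i * P i x))\<bar>"
        using insert.hyps eqT by simp
      also have "\<dots> \<le> e' * \<bar>h$j\<bar> + e' * (\<Sum>i\<in>T. \<bar>h'$i\<bar>)"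
        using step' IH abs_triangle_ineq[of "f (x + h) - f (x + h') - h$j * P j x" "f (x + h') - f x - (\<Sum>i\<in>T. h'$i * P i x)"] by linarith
      also have "\<dots> = e' * (\<Sum>i\<in>insert j T. \<bar>h$i\<bar>)"
        using insert.hyps eqT by (simp add: algebra_simps)
      finally show "\<bar>f (x + h) - f x - (\<Sum>i\<in>insert j T. h$i * P i x)\<bar> \<le> e' * (\<Sum>i\<in>insert j T. \<bar>h$i\<bar>)" .
    qed
  qed
  show "\<exists>d>0. \<forall>y. norm (y - x) < d \<longrightarrow>
          norm (f y - f x - (\<Sum>i\<in>UNIV. (y - x)$i * P i x)) \<le> e * norm (y - x)"
  proof (intro exI[of _ d] conjI allI impI)
    show "d > 0" by fact
    fix y assume y: "norm (y - x) < d"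
    have "\<bar>f (x + (y - x)) - f x - (\<Sum>i\<in>UNIV. (y - x)$i * P i x)\<bar> \<le> e' * (\<Sum>i\<in>UNIV. \<bar>(y - x)$i\<bar>)"
      using main[of UNIV] y by blast
    also have "\<dots> \<le> e' * (\<Sum>i\<in>(UNIV::'n set). norm (y - x))"
    proof -
      have "(\<Sum>i\<in>UNIV. \<bar>(y - x)$i\<bar>) \<le> (\<Sum>i\<in>(UNIV::'n set). norm (y - x))"
        by (meson component_le_norm_cart sum_mono)
      then show ?thesis using e' by (simp add: mult_left_mono)
    qed
    also have "\<dots> = e * norm (y - x)" using e'_def by simp
    finally show "norm (f y - f x - (\<Sum>i\<in>UNIV. (y - x)$i * P i x)) \<le> e * norm (y - x)" by simp
  qed
qed

lemma ode_part:
  fixes h w :: "real \<Rightarrow> real" and B \<alpha> M :: real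
  assumes B: "B > 0" and \<alpha>: "\<alpha> > 0" and M: "M \<ge> 0"
    and hcont: "continuous_on {1..} h"
    and hneg: "\<And>v. v > 1 \<Longrightarrow> h v < 0" and h1: "h 1 = 0"
    and hb: "\<And>u. 0 \<le> u \<Longrightarrow> u \<le> 1 \<Longrightarrow> h (1 + u) \<le> - (\<alpha> * B) * u + M * u^2"
    and wge: "\<And>s. s \<ge> 1 \<Longrightarrow> w s \<ge> 1"
    and wd: "\<And>s. s > 1 \<Longrightarrow> (w has_real_derivative h (w s) / (B * s)) (at s)"
  shows "(w \<longlongrightarrow> 1) at_top \<and> (\<lambda>s. w s - 1) \<in> O(\<lambda>s. s powr (- \<alpha>))"
proof -
  have hle: "h v \<le> 0" if "v \<ge> 1" for v
    using hneg[of v] h1 that by (cases "v = 1") auto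
  have mono: "w t \<le> w s" if "1 < s" "s \<le> t" for s t
  proof (rule DERIV_nonpos_imp_nonincreasing[OF that(2)])
    fix x assume x: "s \<le> x" "x \<le> t"
    show "\<exists>y. (w has_real_derivative y) (at x) \<and> y \<le> 0"
      using wd[of x] x that hle[of "w x"] wge[of x] B
      by (intro exI[of _ "h (w x) / (B * x)"]) (auto intro!: divide_nonpos_pos)
  qed
  have small: "\<exists>s1\<ge>2. \<forall>s\<ge>s1. w s \<le> 1 + \<eta>" if \<eta>: "\<eta> > 0" for \<eta>
  proof (rule ccontr)
    assume nc: "\<not> ?thesis"
    have big: "w s > 1 + \<eta>" if "s \<ge> 2" for s
    proof (rule ccontr)
      assume "\<not> w s > 1 + \<eta>"
      then have "\<forall>t\<ge>s. w t \<le> 1 + \<eta>" using mono[of s] that by force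
      then show False using nc that by blast
    qed
    define S where "S = {1 + \<eta> .. w 2}"
    have "S \<noteq> {}" using big[of 2] by (auto simp: S_def)
    moreover have "continuous_on S h"
      by (rule continuous_on_subset[OF hcont]) (use \<eta> in \<open>auto simp: S_def\<close>)
    ultimately obtain v0 where v0: "v0 \<in> S" "\<And>y. y \<in> S \<Longrightarrow> h y \<le> h v0"
      using continuous_attains_sup[of S h] by (auto simp: S_def)
    define \<mu> where "\<mu> = - h v0"
    have \<mu>: "\<mu> > 0" using v0 \<eta> hneg[of v0] by (auto simp: S_def \<mu>_def)
    have hw: "h (w s) \<le> - \<mu>" if "s \<ge> 2" for s
      using v0(2)[of "w s"] big[OF that] mono[of 2 s] that by (auto simp: S_def \<mu>_def)
    define \<phi> where "\<phi> s = w s + \<mu> / B * ln s" for s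
    have phi: "\<phi> s \<le> \<phi> 2" if "s \<ge> 2" for s
    proof (rule DERIV_nonpos_imp_nonincreasing[OF that])
      fix x :: real assume x: "2 \<le> x" "x \<le> s"
      have "(\<phi> has_real_derivative h (w x) / (B * x) + \<mu> / B * inverse x) (at x)"
        unfolding \<phi>_def using x wd[of x] B
        by (auto intro!: derivative_eq_intros DERIV_ln simp: field_simps)
      moreover have "h (w x) / (B * x) + \<mu> / B * inverse x = (h (w x) + \<mu>) / (B * x)"
        using x B by (simp add: field_simps)
      moreover have "(h (w x) + \<mu>) / (B * x) \<le> 0"
        using hw[of x] x B by (intro divide_nonpos_pos) auto
      ultimately show "\<exists>y. (\<phi> has_real_derivative y) (at x) \<and> y \<le> 0" by auto
    qed
    define s where "s = exp (ln 2 + B * w 2 / \<mu> + 1)"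
    have w2: "w 2 \<ge> 1" using wge by simp
    have s2: "s \<ge> 2"
    proof -
      have "0 \<le> B * w 2 / \<mu>" using B \<mu> w2 by simp
      then have "exp (ln 2) \<le> s" unfolding s_def by (subst exp_le_cancel_iff) linarith
      then show ?thesis by simp
    qed
    have "w s = \<phi> s - \<mu> / B * ln s" by (simp add: \<phi>_def)
    also have "\<dots> \<le> \<phi> 2 - \<mu> / B * ln s" using phi[OF s2] by simp
    also have "\<dots> = w 2 + \<mu> / B * ln 2 - \<mu> / B * (ln 2 + B * w 2 / \<mu> + 1)"
      by (simp add: \<phi>_def s_def)
    also have "\<dots> = - \<mu> / B" using B \<mu> by (simp add: field_simps)
    also have "\<dots> < 1"
    proof -
      have "\<mu> / B > 0" using B \<mu> by simp
      moreover have "- \<mu> / B = - (\<mu> / B)" by simp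
      ultimately show ?thesis by linarith
    qed
    finally show False using wge[of s] s2 by simp
  qed
  have lim: "(w \<longlongrightarrow> 1) at_top"
    unfolding tendsto_iff
  proof (intro allI impI)
    fix e :: real assume e: "e > 0"
    obtain s1 where s1: "s1 \<ge> 2" "\<And>s. s \<ge> s1 \<Longrightarrow> w s \<le> 1 + e / 2"
      using small[of "e/2"] e by auto
    show "\<forall>\<^sub>F x in at_top. dist (w x) 1 < e"
      unfolding eventually_at_top_linorder
    proof (intro exI allI impI)
      fix s assume "s \<ge> s1"
      then have "w s \<le> 1 + e / 2" "w s \<ge> 1" using s1 wge[of s] by auto
      then show "dist (w s) 1 < e" using e by (auto simp: dist_real_def)
    qed
  qed
  define k where "k = M / (\<alpha> * B)"
  have k: "k \<ge> 0" using M \<alpha> B by (simp add: k_def)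
  have Mk: "M = k * (\<alpha> * B)" using \<alpha> B by (simp add: k_def)
  define \<eta> where "\<eta> = 1 / (2 * (k + 1))"
  have \<eta>: "\<eta> > 0" "\<eta> \<le> 1" "k * \<eta> \<le> 1/2" using k by (auto simp: \<eta>_def field_simps)
  obtain s1 where s1: "s1 \<ge> 2" "\<And>s. s \<ge> s1 \<Longrightarrow> w s \<le> 1 + \<eta>"
    using small[OF \<eta>(1)] by auto
  define P where "P s = s powr \<alpha> * (w s - 1) / (1 - k * (w s - 1))" for s
  have dpos: "1 - k * (w s - 1) \<ge> 1/2" if "s \<ge> s1" for s
  proof -
    have "k * (w s - 1) \<le> k * \<eta>" using s1(2)[OF that] k by (intro mult_left_mono) auto
    then show ?thesis using \<eta> by linarith
  qed
  have Pmono: "P s \<le> P s1" if "s \<ge> s1" for s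
  proof (rule DERIV_nonpos_imp_nonincreasing[OF that])
    fix x assume x: "s1 \<le> x" "x \<le> s"
    define u where "u = w x - 1"
    define u' where "u' = h (w x) / (B * x)"
    define d where "d = 1 - k * u"
    define p where "p = x powr \<alpha>"
    define q where "q = x powr (\<alpha> - 1)"
    have x1: "x > 1" using x s1 by simp
    have d: "d \<ge> 1/2" using dpos[OF x(1)] by (simp add: d_def u_def)
    have u: "0 \<le> u" "u \<le> 1" using wge[of x] s1(2)[OF x(1)] \<eta> x1 by (auto simp: u_def)
    have p: "p > 0" using x1 by (simp add: p_def)
    have qp: "q = p / x" using x1 by (simp add: p_def q_def powr_diff)
    have d2: "((\<lambda>s. w s - 1) has_real_derivative u') (at x)"
      using DERIV_diff[OF wd[OF x1] DERIV_const] by (simp add: u'_def)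
    have d3: "((\<lambda>s. 1 - k * (w s - 1)) has_real_derivative - (k * u')) (at x)"
      using DERIV_diff[OF DERIV_const DERIV_cmult[OF d2]] by simp
    have dne: "1 - k * (w x - 1) \<noteq> 0" using d by (simp add: d_def u_def)
    note D = DERIV_divide[OF DERIV_mult[OF has_real_derivative_powr[of x \<alpha>] d2] d3 dne]
    have "(P has_real_derivative ((\<alpha> * q * u + p * u') * d - p * u * (- (k * u'))) / d^2) (at x)"
      using D x1 unfolding P_def by (simp add: u_def d_def q_def p_def power2_eq_square mult.commute)
    moreover have "((\<alpha> * q * u + p * u') * d - p * u * (- (k * u'))) / d^2 \<le> 0"
    proof -
      have num: "(\<alpha> * q * u + p * u') * d - p * u * (- (k * u')) = \<alpha> * q * u * d + p * u'"
        by (simp add: d_def algebra_simps)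
      have "h (w x) \<le> - (\<alpha> * B) * u + M * u^2"
        using hb[OF u] by (simp add: u_def)
      also have "\<dots> = - (\<alpha> * B) * u * d" by (simp add: Mk d_def power2_eq_square algebra_simps)
      finally have "u' \<le> - (\<alpha> * B) * u * d / (B * x)"
        unfolding u'_def using B x1 by (intro divide_right_mono) auto
      also have "\<dots> = - \<alpha> * u * d / x" using B by simp
      finally have "p * u' \<le> p * (- \<alpha> * u * d / x)" using p by (intro mult_left_mono) auto
      also have "\<dots> = - \<alpha> * q * u * d" using qp by simp
      finally have "\<alpha> * q * u * d + p * u' \<le> 0" by simp
      moreover have "d^2 > 0" using d by simp
      ultimately show ?thesis using num by (simp add: divide_nonpos_pos)
    qed
    ultimately show "\<exists>y. (P has_real_derivative y) (at x) \<and> y \<le> 0" by blast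
  qed
  have bnd: "norm (w s - 1) \<le> P s1 * norm (s powr (- \<alpha>))" if "s \<ge> s1" for s
  proof -
    have s0: "s > 0" using that s1 by simp
    have u: "0 \<le> w s - 1" using wge[of s] that s1 by simp
    have d: "1 - k * (w s - 1) \<ge> 1/2" "1 - k * (w s - 1) \<le> 1" using dpos[OF that] k u by auto
    have "w s - 1 \<le> (w s - 1) / (1 - k * (w s - 1))"
    proof -
      have "(w s - 1) * (1 - k * (w s - 1)) \<le> (w s - 1) * 1"
        using u d by (intro mult_left_mono) auto
      then show ?thesis using d by (simp add: le_divide_eq)
    qed
    also have "\<dots> = P s / s powr \<alpha>" using s0 by (simp add: P_def)
    also have "\<dots> \<le> P s1 / s powr \<alpha>" using Pmono[OF that] s0 by (simp add: divide_right_mono)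
    also have "\<dots> = P s1 * s powr (- \<alpha>)" by (simp add: powr_minus divide_inverse)
    finally show ?thesis using u s0 by simp
  qed
  have "(\<lambda>s. w s - 1) \<in> O(\<lambda>s. s powr (- \<alpha>))"
    by (rule bigoI[where c="P s1"]) (use bnd in \<open>auto simp: eventually_at_top_linorder\<close>)
  with lim show ?thesis by blast
qed

lemma line_deriv:
  fixes f :: "real^'n::finite \<Rightarrow> real"
  assumes "(f has_derivative (\<lambda>h. \<Sum>i\<in>UNIV. h$i * Q i)) (at (x + t *\<^sub>R v))"
  shows "((\<lambda>s. f (x + s *\<^sub>R v)) has_real_derivative (\<Sum>i\<in>UNIV. v$i * Q i)) (at t)"
proof -
  have inner: "((\<lambda>s. x + s *\<^sub>R v) has_derivative (\<lambda>s. s *\<^sub>R v)) (at t)"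
    by (auto intro!: derivative_eq_intros)
  show ?thesis unfolding has_field_derivative_def
    by (rule has_derivative_eq_rhs[OF has_derivative_compose[OF inner assms]])
       (auto simp: fun_eq_iff sum_distrib_left mult_ac)
qed

theorem lemma2p4:
  fixes \<Gamma> :: "(real ^ 'n::{finite,wellorder}) set"
    and f :: "real ^ 'n::{finite,wellorder} \<Rightarrow> real"
    and a :: "real ^ 'n::{finite,wellorder}"
    and g :: "real \<Rightarrow> real"
    and w :: "real \<Rightarrow> real"
    and c2 \<delta> :: real
  assumes Gamma_open: "open \<Gamma>"
    and Gamma_convex: "convex \<Gamma>"
    and Gamma_cone: "\<forall>x\<in>\<Gamma>. \<forall>t>0. t *\<^sub>R x \<in> \<Gamma>"
    and Gamma_proper: "\<Gamma> \<noteq> UNIV"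
    and Gamma_pos: "{x. \<forall>i. x $ i > 0} \<subseteq> \<Gamma>"
    and Gamma_sum: "\<Gamma> \<subseteq> {x. (\<Sum>i\<in>UNIV. x $ i) > 0}"
    and f_smooth: "smooth_on \<Gamma> f"
    and f_sym: "\<forall>\<sigma>. \<sigma> permutes (UNIV :: 'n set) \<longrightarrow>
                  (\<forall>x\<in>\<Gamma>. permute_vec \<sigma> x \<in> \<Gamma> \<and> f (permute_vec \<sigma> x) = f x)"
    and f_incr: "\<forall>x\<in>\<Gamma>. \<forall>i. pdiff f i x > 0"
    and f_norm: "\<exists>astar>0. f (astar *\<^sub>R (\<chi> i. 1)) = 1"
    and f_bdry: "\<forall>l0\<in>frontier \<Gamma>. Limsup (at l0 within \<Gamma>) (\<lambda>x. ereal (f x)) < 1"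
    and a_A: "in_calA f a"
    and a_sorted: "\<forall>i j. i \<le> j \<longrightarrow> a $ i \<le> a $ j"
    and a_max1: "pdiff f first_idx a = Max (range (\<lambda>i. pdiff f i a))"
    and g_smooth: "smooth_real_on {1..} g"
    and g_Gamma: "\<forall>v\<ge>1. (\<chi> i. if i = first_idx then g v else a $ i * v) \<in> \<Gamma>"
    and g_level: "\<forall>v\<ge>1. f (\<chi> i. if i = first_idx then g v else a $ i * v) = 1"
    and c2: "c2 > 1"
    and delta: "\<delta> \<ge> 0"
    and alpha: "(\<Sum>i\<in>UNIV. a $ i * pdiff f i a) /
                ((2 * a $ last_idx + \<delta>) * pdiff f first_idx a) > 1"
    and w_range: "\<forall>s\<ge>1. w s \<ge> 1"
    and w_ode: "\<forall>s\<ge>1. (w has_real_derivative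
                  (g (w s) - a $ first_idx * w s) / ((2 * a $ last_idx + \<delta>) * s)) (at s within {1..})"
    and w_init: "w 1 = c2"
  shows "(w \<longlongrightarrow> 1) at_top \<and>
         (\<lambda>s. w s - 1) \<in> O(\<lambda>s. s powr (- ((\<Sum>i\<in>UNIV. a $ i * pdiff f i a) /
                ((2 * a $ last_idx + \<delta>) * pdiff f first_idx a))))"
proof -
  define e :: 'n where "e = first_idx"
  obtain D where D0: "D [] = f" and Dc: "\<And>ks. continuous_on \<Gamma> (D ks)"
    and Dd: "\<And>ks i x. x \<in> \<Gamma> \<Longrightarrow> ((\<lambda>t. D ks (x + t *\<^sub>R axis i 1)) has_real_derivative D (i # ks) x) (at 0)"
    using f_smooth unfolding smooth_on_def by blast
  have der: "((\<lambda>t. f (y + t *\<^sub>R axis i 1)) has_real_derivative D [i] y) (at 0)" if "y \<in> \<Gamma>" for i y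
    using Dd[OF that, of "[]" i] D0 by simp
  have pd: "pdiff f i y = D [i] y" if "y \<in> \<Gamma>" for i y
    unfolding pdiff_def using DERIV_imp_deriv[OF der[OF that]] .
  have Dpos: "D [i] y > 0" if "y \<in> \<Gamma>" for i y using f_incr that pd by metis
  have fder: "(f has_derivative (\<lambda>h. \<Sum>i\<in>UNIV. h$i * D [i] y)) (at y)" if "y \<in> \<Gamma>" for y
    by (rule partials_has_derivative[OF Gamma_open that Dc der])
  have mvt: "\<exists>z\<in>\<Gamma>. f (x + v) - f x = (\<Sum>i\<in>UNIV. v$i * D [i] z)" if xG: "x \<in> \<Gamma>" and xvG: "x + v \<in> \<Gamma>" for x v
  proof -
    have seg: "x + t *\<^sub>R v \<in> \<Gamma>" if "0 \<le> t" "t \<le> 1" for t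
    proof -
      have "(1 - t) *\<^sub>R x + t *\<^sub>R (x + v) \<in> \<Gamma>"
        using convexD_alt[OF Gamma_convex xG xvG that] .
      moreover have "(1 - t) *\<^sub>R x + t *\<^sub>R (x + v) = x + t *\<^sub>R v" by (simp add: algebra_simps)
      ultimately show ?thesis by simp
    qed
    have dd: "((\<lambda>s. f (x + s *\<^sub>R v)) has_real_derivative (\<Sum>i\<in>UNIV. v$i * D [i] (x + t *\<^sub>R v))) (at t)"
      if "0 \<le> t" "t \<le> 1" for t
      by (rule line_deriv, rule fder, rule seg[OF that])
    obtain z where "0 < z" "z < 1"
      "f (x + 1 *\<^sub>R v) - f (x + 0 *\<^sub>R v) = (1 - 0) * (\<Sum>i\<in>UNIV. v$i * D [i] (x + z *\<^sub>R v))"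
      using MVT2[OF zero_less_one dd] by blast
    then show ?thesis using seg[of z] by auto
  qed
  have incr: "f x < f (x + c *\<^sub>R axis j 1)" if xcG: "x \<in> \<Gamma>" "x + c *\<^sub>R axis j 1 \<in> \<Gamma>" and cpos: "c > 0" for x c j
  proof -
    obtain z where z: "z \<in> \<Gamma>" "f (x + c *\<^sub>R axis j 1) - f x = (\<Sum>i\<in>UNIV. (c *\<^sub>R axis j 1)$i * D [i] z)"
      using mvt[OF xcG] by blast
    have "(\<Sum>i\<in>UNIV. (c *\<^sub>R axis j 1)$i * D [i] z) = (\<Sum>i\<in>UNIV. if i = j then c * D [j] z else 0)"
      by (rule sum.cong) (auto simp: axis_def)
    also have "\<dots> = c * D [j] z" by simp
    finally have "f (x + c *\<^sub>R axis j 1) - f x = c * D [j] z" using z by simp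
    moreover have "c * D [j] z > 0" using Dpos[OF z(1)] cpos by simp
    ultimately show ?thesis by linarith
  qed
  have apos: "\<forall>i. a$i > 0" and fa: "f a = 1" using a_A unfolding in_calA_def by auto
  have aG: "a \<in> \<Gamma>" using Gamma_pos apos by auto
  have vaG: "v *\<^sub>R a \<in> \<Gamma>" if "v > 0" for v using Gamma_pos apos that by auto
  define h where "h v = g v - a$e * v" for v
  define X where "X v = v *\<^sub>R a + h v *\<^sub>R axis e 1" for v
  have X_eq: "(\<chi> i. if i = first_idx then g v else a $ i * v) = X v" for v
    by (auto simp: vec_eq_iff X_def h_def axis_def e_def)
  have XG: "X v \<in> \<Gamma>" if "v \<ge> 1" for v using g_Gamma that X_eq by metis
  have fX: "f (X v) = 1" if "v \<ge> 1" for v using g_level that X_eq by metis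
  have fwa: "f (v *\<^sub>R a) > 1" if v1: "v > 1" for v
  proof -
    have "a + (v - 1) *\<^sub>R a = v *\<^sub>R a" by (simp add: algebra_simps)
    then have G: "a + (v - 1) *\<^sub>R a \<in> \<Gamma>" using vaG[of v] v1 by simp
    obtain z where z: "z \<in> \<Gamma>" "f (a + (v - 1) *\<^sub>R a) - f a = (\<Sum>i\<in>UNIV. ((v - 1) *\<^sub>R a)$i * D [i] z)"
      using mvt[OF aG G] by blast
    have "(\<Sum>i\<in>UNIV. ((v - 1) *\<^sub>R a)$i * D [i] z) = (v - 1) * (\<Sum>i\<in>UNIV. a$i * D [i] z)"
      by (simp add: sum_distrib_left mult_ac)
    moreover have "(\<Sum>i\<in>UNIV. a$i * D [i] z) > 0"
      using apos Dpos[OF z(1)] by (intro sum_pos) auto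
    ultimately have "f (a + (v - 1) *\<^sub>R a) - f a > 0" using z v1 by simp
    then show ?thesis using fa \<open>a + (v - 1) *\<^sub>R a = v *\<^sub>R a\<close> by simp
  qed
  have h1: "h 1 = 0"
  proof (rule ccontr)
    assume ne: "h 1 \<noteq> 0"
    have X1: "X 1 = a + h 1 *\<^sub>R axis e 1" by (simp add: X_def)
    show False
    proof (cases "h 1 > 0")
      case True then have "f a < f (X 1)" using incr[of a "h 1" e] aG XG[of 1] X1 by simp
      then show False using fa fX[of 1] by simp
    next
      case False then have hn: "h 1 < 0" using ne by simp
      have "X 1 + (- h 1) *\<^sub>R axis e 1 = a" using X1 by simp
      then have "f (X 1) < f a" using incr[of "X 1" "- h 1" e] hn aG XG[of 1] by simp
      then show False using fa fX[of 1] by simp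
    qed
  qed
  have hneg: "h v < 0" if "v > 1" for v
  proof (rule ccontr)
    assume "\<not> h v < 0"
    then have hv: "h v \<ge> 0" by simp
    have "f (v *\<^sub>R a) \<le> f (X v)"
    proof (cases "h v = 0")
      case True then show ?thesis by (simp add: X_def)
    next
      case False then show ?thesis
        using incr[of "v *\<^sub>R a" "h v" e] vaG[of v] XG[of v] that hv by (simp add: X_def)
    qed
    then show False using fwa[OF that] fX[of v] that by simp
  qed
  obtain Dg where Dg0: "Dg 0 = g"
    and Dgd: "\<And>k x. x \<in> {1..} \<Longrightarrow> (Dg k has_real_derivative Dg (Suc k) x) (at x within {1..})"
    using g_smooth unfolding smooth_real_on_def by blast
  have Dg_at: "(Dg k has_real_derivative Dg (Suc k) x) (at x)" if "x > 1" for k x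
  proof -
    have "at x within {1..} = at x" using that by (intro at_within_interior) (simp add: interior_real_atLeast)
    then show ?thesis using Dgd[of x k] that by simp
  qed
  have Dg_cont: "continuous_on {1..} (Dg k)" for k
    by (rule DERIV_continuous_on[OF Dgd])
  have g_cont: "continuous_on {1..} g" using Dg_cont[of 0] Dg0 by simp
  have h_cont: "continuous_on {1..} h" unfolding h_def
    by (intro continuous_on_diff g_cont continuous_intros)
  define g1 where "g1 = Dg 1 1"
  have gder1: "(g has_real_derivative g1) (at 1 within {1..})" using Dgd[of 1 0] Dg0 by (simp add: g1_def)
  have hder1: "(h has_real_derivative (g1 - a$e)) (at 1 within {1..})"
    unfolding h_def by (auto intro!: derivative_eq_intros gder1)
  have Xder: "(X has_derivative (\<lambda>t. t *\<^sub>R a + ((g1 - a$e) * t) *\<^sub>R axis e 1)) (at 1 within {1..})"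
    unfolding X_def using hder1[unfolded has_field_derivative_def]
    by (auto intro!: derivative_eq_intros)
  have Xa: "X 1 = a" using h1 by (simp add: X_def)
  have fderX: "(f has_derivative (\<lambda>h. \<Sum>i\<in>UNIV. h$i * D [i] a)) (at (X 1))" using fder[OF aG] Xa by simp
  note comp = has_derivative_compose[OF Xder fderX]
  define K where "K = (\<Sum>i\<in>UNIV. a$i * D [i] a)"
  define Fe where "Fe = D [e] a"
  have sum_eq: "(\<Sum>i\<in>UNIV. (t *\<^sub>R a + ((g1 - a$e) * t) *\<^sub>R axis e 1)$i * D [i] a) = (K + (g1 - a$e) * Fe) * t" for t
  proof -
    have "(\<Sum>i\<in>UNIV. (t *\<^sub>R a + ((g1 - a$e) * t) *\<^sub>R axis e 1)$i * D [i] a)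
        = (\<Sum>i\<in>UNIV. t * (a$i * D [i] a) + (if i = e then (g1 - a$e) * t * D [e] a else 0))"
      by (rule sum.cong) (auto simp: axis_def algebra_simps)
    also have "\<dots> = t * K + (g1 - a$e) * t * D [e] a" by (simp add: sum.distrib sum_distrib_left K_def)
    finally show ?thesis by (simp add: algebra_simps Fe_def)
  qed
  have eqf: "(\<lambda>t. \<Sum>i\<in>UNIV. (t *\<^sub>R a + ((g1 - a$e) * t) *\<^sub>R axis e 1)$i * D [i] a) = (*) (K + (g1 - a$e) * Fe)"
    by (rule ext) (rule sum_eq)
  have compd: "((\<lambda>v. f (X v)) has_real_derivative (K + (g1 - a$e) * Fe)) (at 1 within {1..})"
    unfolding has_field_derivative_def using comp[unfolded eqf] .
  have zero: "K + (g1 - a$e) * Fe = 0"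
  proof -
    have lim: "((\<lambda>y. (f (X y) - f (X 1)) / (y - 1)) \<longlongrightarrow> (K + (g1 - a$e) * Fe)) (at 1 within {1..})"
      using compd by (simp add: has_field_derivative_iff)
    have ev: "\<forall>\<^sub>F y in at 1 within {1..}. (f (X y) - f (X 1)) / (y - 1) = 0"
      using fX by (auto simp: eventually_at_filter)
    have "((\<lambda>y::real. 0::real) \<longlongrightarrow> (K + (g1 - a$e) * Fe)) (at 1 within {1..})"
      using lim unfolding tendsto_cong[OF ev] .
    moreover have "at (1::real) within {1..} \<noteq> bot" by (simp add: at_within_Ici_at_right)
    ultimately show ?thesis using tendsto_const_iff by metis
  qed
  have Fe: "Fe > 0" using Dpos[OF aG] by (simp add: Fe_def)
  define B where "B = 2 * a $ last_idx + \<delta>"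
  have B: "B > 0" using apos delta by (simp add: B_def add_pos_nonneg)
  define \<alpha> where "\<alpha> = K / (B * Fe)"
  have Keq: "(\<Sum>i\<in>UNIV. a $ i * pdiff f i a) = K" by (simp add: K_def pd[OF aG])
  have Feeq: "pdiff f first_idx a = Fe" by (simp add: Fe_def e_def pd[OF aG])
  have alpha_eq: "(\<Sum>i\<in>UNIV. a $ i * pdiff f i a) / ((2 * a $ last_idx + \<delta>) * pdiff f first_idx a) = \<alpha>"
    by (simp add: Keq Feeq \<alpha>_def B_def)
  have \<alpha>: "\<alpha> > 0" using alpha alpha_eq by simp
  have g1eq: "g1 - a$e = - (\<alpha> * B)"
    using zero Fe B by (simp add: \<alpha>_def field_simps)
  have "compact (Dg 2 ` {1..2})"
    by (rule compact_continuous_image[OF continuous_on_subset[OF Dg_cont]]) auto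
  then obtain M where M: "M > 0" "\<And>y. y \<in> {1..2} \<Longrightarrow> \<bar>Dg 2 y\<bar> \<le> M"
    using compact_imp_bounded bounded_pos by (metis image_eqI real_norm_def)
  have step1: "Dg 1 y \<le> g1 + M * (y - 1)" if y: "1 \<le> y" "y \<le> 2" for y
  proof -
    have "(\<lambda>z. g1 + M * (z - 1) - Dg 1 z) 1 \<le> (\<lambda>z. g1 + M * (z - 1) - Dg 1 z) y"
    proof (rule DERIV_nonneg_imp_increasing_open[OF y(1)])
      fix x :: real assume x: "1 < x" "x < y"
      have "Dg (Suc 1) x \<le> M" using M(2)[of x] x y by (auto simp: numeral_2_eq_2)
      moreover have "((\<lambda>z. g1 + M * (z - 1) - Dg 1 z) has_real_derivative M - Dg (Suc 1) x) (at x)"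
        using Dg_at[of x 1] x by (auto intro!: derivative_eq_intros)
      ultimately show "\<exists>d. ((\<lambda>z. g1 + M * (z - 1) - Dg 1 z) has_real_derivative d) (at x) \<and> 0 \<le> d"
        by (intro exI[of _ "M - Dg (Suc 1) x"]) simp
    next
      show "continuous_on {1..y} (\<lambda>z. g1 + M * (z - 1) - Dg 1 z)"
        by (intro continuous_intros continuous_on_subset[OF Dg_cont]) auto
    qed
    then show ?thesis by (simp add: g1_def)
  qed
  have taylor: "g (1 + u) \<le> g 1 + g1 * u + M * u^2" if u: "0 \<le> u" "u \<le> 1" for u
  proof -
    define \<phi> where "\<phi> z = g 1 + g1 * (z - 1) + M * ((z - 1) * (z - 1)) - Dg 0 z" for z
    have "\<phi> 1 \<le> \<phi> (1 + u)"
    proof (rule DERIV_nonneg_imp_increasing_open[of 1 "1 + u" \<phi>])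
      show "1 \<le> 1 + u" using u by simp
    next
      fix x :: real assume x: "1 < x" "x < 1 + u"
      have "Dg (Suc 0) x \<le> g1 + M * (x - 1)" using step1[of x] x u by simp
      moreover have "0 \<le> M * (x - 1)" using M(1) x by simp
      moreover have "M * (2 * (x - 1)) = 2 * (M * (x - 1))" by simp
      ultimately have nn: "0 \<le> g1 + M * (2 * (x - 1)) - Dg (Suc 0) x" by linarith
      have "(\<phi> has_real_derivative g1 + M * (2 * (x - 1)) - Dg (Suc 0) x) (at x)"
        unfolding \<phi>_def using Dg_at[of x 0] x by (auto intro!: derivative_eq_intros simp: algebra_simps)
      with nn show "\<exists>d. (\<phi> has_real_derivative d) (at x) \<and> 0 \<le> d" by blast
    next
      show "continuous_on {1..1 + u} \<phi>" unfolding \<phi>_def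
        by (intro continuous_intros continuous_on_subset[OF Dg_cont]) auto
    qed
    then show ?thesis using Dg0 by (simp add: \<phi>_def power2_eq_square)
  qed
  have hb: "h (1 + u) \<le> - (\<alpha> * B) * u + M * u^2" if "0 \<le> u" "u \<le> 1" for u
  proof -
    have "h (1 + u) = g (1 + u) - a$e - a$e * u" by (simp add: h_def algebra_simps)
    also have "\<dots> \<le> g 1 + g1 * u + M * u^2 - a$e - a$e * u" using taylor[OF that] by simp
    also have "\<dots> = h 1 + (g1 - a$e) * u + M * u^2" by (simp add: h_def algebra_simps)
    also have "\<dots> = - (\<alpha> * B) * u + M * u^2" using h1 g1eq by simp
    finally show ?thesis .
  qed
  have wd: "(w has_real_derivative h (w s) / (B * s)) (at s)" if "s > 1" for s
  proof -
    have "at s within {1..} = at s" using that by (intro at_within_interior) (simp add: interior_real_atLeast)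
    moreover have "(w has_real_derivative (g (w s) - a $ first_idx * w s) / ((2 * a $ last_idx + \<delta>) * s)) (at s within {1..})"
      using w_ode that by simp
    ultimately show ?thesis by (simp add: h_def B_def e_def)
  qed
  have "(w \<longlongrightarrow> 1) at_top \<and> (\<lambda>s. w s - 1) \<in> O(\<lambda>s. s powr (- \<alpha>))"
    by (rule ode_part[OF B \<alpha> less_imp_le[OF M(1)] h_cont hneg h1 hb]) (use w_range wd in auto)
  then show ?thesis using alpha_eq by simp
qed

end
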